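(* Let $q\in\mathbb{C}$ with $0<|q|<1$ and $l,m,n,u,v\in\mathbb{N}$. Then \[ \frac{1}{(q)_{l+m}(q)_{l+n}(q)_u(q)_v} \sum_{k=0}^\infty\frac{q^{k^2} (q)_{l+m+n-k}(q)_{u+v+k}} {(q)_k (q)_{l-k}(q)_{m-k}(q)_{n-k} (q)_{u+k}(q)_{v+k}} =\frac{1}{(q)_{l+u}(q)_{l+v}(q)_m(q)_n} \sum_{k=0}^\infty\frac{q^{k^2} (q)_{l+u+v-k}(q)_{m+n+k}} {(q)_k (q)_{l-k}(q)_{u-k}(q)_{v-k} (q)_{m+k}(q)_{n+k}}, \] and \[ \frac{1}{(q)_{l+m+1}(q)_{l+n+1}(q)_u(q)_v} \sum_{k=0}^\infty\frac{q^{k^2+k} (q)_{l+m+n-k+1}(q)_{u+v+k+1}} {(q)_k (q)_{l-k}(q)_{m-k}(q)_{n-k} (q)_{u+k+1}(q)_{v+k+1}} =\frac{1}{(q)_{l+u+1}(q)_{l+v+1}(q)_m(q)_n} \sum_{k=0}^\infty\frac{q^{k^2+k} (q)_{l+u+v-k+1}(q)_{m+n+k+1}} {(q)_k (q)_{l-k}(q)_{u-k}(q)_{v-k} (q)_{m+k+1}(q)_{n+k+1}}. \]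
   Context: $(q)_n=(q;q)_n=(1-q)(1-q^2)\cdots(1-q^n)$ for $n\ge0$ (with $(q)_0=1$), and $1/(q)_n=0$ for $n<0$. *)

theory Defs
  imports "HOL-Analysis.Analysis"
begin

definition qpoch :: "complex \<Rightarrow> nat \<Rightarrow> complex" where
  "qpoch q n = (\<Prod>i=1..n. 1 - q ^ i)"

text \<open>(q;q)_n on an integer index, with value for negative n irrelevant
 (only used in numerators where the term vanishes anyway); we set it to 1.\<close>
definition qp :: "complex \<Rightarrow> int \<Rightarrow> complex" where
  "qp q n = (if n < 0 then 1 else qpoch q (nat n))"

definition qp_inv :: "complex \<Rightarrow> int \<Rightarrow> complex" where
  "qp_inv q n = (if n < 0 then 0 else 1 / qpoch q (nat n))"

end

theory Submission
  imports Defs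
begin

lemma qpoch_0[simp]: "qpoch q 0 = 1" by (simp add: qpoch_def)
lemma qpoch_Suc: "qpoch q (Suc n) = qpoch q n * (1 - q ^ Suc n)"
  by (simp add: qpoch_def prod.nat_ivl_Suc' mult.commute)

lemma qpoch_nz: assumes "norm q < 1" shows "qpoch q n \<noteq> 0"
proof (induction n)
  case 0 then show ?case by simp
next
  case (Suc n)
  have "norm q ^ Suc n < 1" using assms by (metis norm_ge_zero power_less_one_iff zero_less_Suc)
  then have "norm (q ^ Suc n) < 1" by (simp only: norm_power)
  then have "q ^ Suc n \<noteq> 1" by (metis norm_one order_less_irrefl)
  then show ?case using Suc by (simp add: qpoch_Suc)
qed

lemma pow_ne1: fixes q :: complex assumes "norm q < 1" "0 < k" shows "1 - q ^ k \<noteq> 0"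
proof -
  have "norm q ^ k < 1" using assms by (metis norm_ge_zero power_less_one_iff)
  then have "norm (q ^ k) < 1" by (simp only: norm_power)
  then have "q ^ k \<noteq> 1" by (metis norm_one order_less_irrefl)
  then show ?thesis by simp
qed

lemma qi_nat: "qp_inv q (int n) = 1 / qpoch q n" by (simp add: qp_inv_def)
lemma qi_neg: "n < 0 \<Longrightarrow> qp_inv q n = 0" by (simp add: qp_inv_def)
lemma qp_nat: "qp q (int n) = qpoch q n" by (simp add: qp_def)

lemma qi_shift:
  assumes "norm q < 1" "q \<noteq> 0"
  shows "qp_inv q (n - 1) = (1 - q powi n) * qp_inv q n"
proof (cases "n \<le> 0")
  case True
  then show ?thesis
    by (cases "n = 0") (auto simp: qp_inv_def)
next
  case False
  define k where "k = nat (n - 1)"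
  have k: "n = int (Suc k)" using False by (simp add: k_def)
  have nk: "n - 1 = int k" using k by simp
  have l1: "qp_inv q (n-1) = 1 / qpoch q k" unfolding nk by (rule qi_nat)
  have l2: "qp_inv q n = 1 / (qpoch q k * (1 - q ^ Suc k))" by (simp only: k qi_nat qpoch_Suc)
  have l3: "q powi n = q ^ Suc k" by (simp only: k power_int_of_nat)
  have z1: "qpoch q k \<noteq> 0" by (rule qpoch_nz[OF assms(1)])
  have z2: "1 - q ^ Suc k \<noteq> 0" by (rule pow_ne1[OF assms(1)]) simp
  show ?thesis unfolding l1 l2 l3 using z1 z2 by (simp add: field_simps)
qed

lemma wz_poly:
  fixes x a b c d q :: complex
  assumes "x \<noteq> 0"
  shows "((1 - q*b)*(1 - q*b*d))*x*(x*(1 - q*a*b*c*d/x)) =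
     ((1-q*a*b*d)*(1-q*b*c*d))*x*(x*(1 - q*b/x)) + (- q*b)*x*(x*x*d*(1-c/x)*(1-a/x)*(1-q*b/x))
     - (- q*b)*x*((1 - q*a*b*c*d/x)*(1-x)*(1-d*x))"
  using assms by (simp add: field_simps)

lemma wz_scalar:
  fixes x a b c d q rho C Q1 z1 z2 U :: complex
  assumes x0: "x \<noteq> 0" and D0: "D \<noteq> 0" and Dd: "D = (1-q*b)*(1-q*b*d)"
    and rD: "rho * D = (1-q*a*b*d)*(1-q*b*c*d)" and cD: "C * D = - q*b"
    and h1: "Q1 * x = q*a*b*c*d" and h2: "z1 * x = c" and h3: "z2 * x = q*b" and h4: "U * x = a"
  shows "x*(1 - Q1) = rho * (x*(1 - z2)) + C * (x*x*d*(1-z1)*(1-U)*(1-z2)) - C * ((1 - Q1)*(1-x)*(1-d*x))"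
proof -
  have e1: "Q1 = q*a*b*c*d/x" using h1 x0 by (simp add: field_simps)
  have e2: "z1 = c/x" using h2 x0 by (simp add: field_simps)
  have e3: "z2 = q*b/x" using h3 x0 by (simp add: field_simps)
  have e4: "U = a/x" using h4 x0 by (simp add: field_simps)
  have P: "D*x*(x*(1 - Q1)) = (rho*D)*x*(x*(1 - z2)) + (C*D)*x*(x*x*d*(1-z1)*(1-U)*(1-z2))
     - (C*D)*x*((1 - Q1)*(1-x)*(1-d*x))"
    unfolding rD cD unfolding Dd e1 e2 e3 e4 by (rule wz_poly[OF x0])
  have "D*x*(x*(1 - Q1)) = D*x*(rho * (x*(1 - z2)) + C * (x*x*d*(1-z1)*(1-U)*(1-z2)) - C * ((1 - Q1)*(1-x)*(1-d*x)))"
    unfolding P by (simp add: algebra_simps)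
  then show ?thesis using x0 D0 by simp
qed


lemma lin_comb:
  fixes X Y Z W r c B :: complex
  assumes "X = r*Y + c*Z - c*W"
  shows "B*X = r*(B*Y) + c*(B*Z) - c*(B*W)"
  unfolding assms by (simp add: algebra_simps)

definition tS :: "complex \<Rightarrow> nat \<Rightarrow> nat \<Rightarrow> nat \<Rightarrow> nat \<Rightarrow> nat \<Rightarrow> complex" where
  "tS q u v p r j = q^(j*j + r*j) * qpoch q (u+v+p+r-j) * qp_inv q (int j) * qp_inv q (int p - int j)
     * qp_inv q (int u - int j) * qp_inv q (int v - int j) * qp_inv q (int r + int j)"

definition GS :: "complex \<Rightarrow> nat \<Rightarrow> nat \<Rightarrow> nat \<Rightarrow> nat \<Rightarrow> nat \<Rightarrow> complex" where
  "GS q u v p r j = q^(j*(j-1) + r*j) * qpoch q (u+v+p+r+1-j) * qp_inv q (int j - 1) * qp_inv q (int p - int j)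
     * qp_inv q (int u - int j) * qp_inv q (int v + 1 - int j) * qp_inv q (int r + int j - 1)"

lemma wz_point:
  fixes q :: complex
  assumes nq: "norm q < 1" and q0: "q \<noteq> 0" and ju: "j \<le> u"
  shows "tS q u (Suc v) p r j =
     (1-q^(u+v+r+1))*(1-q^(v+p+r+1))/((1-q^(v+1))*(1-q^(v+r+1))) * tS q u v p r j
     + (0 - q^(v+1)/((1-q^(v+1))*(1-q^(v+r+1)))) * GS q u v p r (Suc j)
     - (0 - q^(v+1)/((1-q^(v+1))*(1-q^(v+r+1)))) * GS q u v p r j"
proof -
  define x where "x = q^j"
  define d where "d = q^r"
  define N where "N = u+v+p+r"
  define B where "B = q^(j*(j-1)+r*j) * qpoch q (N-j) * qp_inv q (int j) * qp_inv q (int p - int j)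
     * qp_inv q (int u - int j) * qp_inv q (int v + 1 - int j) * qp_inv q (int r + int j)"
  define Q1 where "Q1 = q^(N+1-j)"
  define z1 where "z1 = q powi (int p - int j)"
  define z2 where "z2 = q powi (int v + 1 - int j)"
  define U where "U = q^(u-j)"
  have jN: "j \<le> N" using ju by (simp add: N_def)
  have pq1: "qpoch q (Suc (N-j)) = qpoch q (N-j) * (1 - Q1)"
    using jN by (simp add: qpoch_Suc Q1_def Suc_diff_le)
  have ex1: "q^(j*j+r*j) = q^(j*(j-1)+r*j) * x"
  proof -
    have "j*j + r*j = j*(j-1)+r*j + j" by (cases j) auto
    then show ?thesis by (simp add: x_def power_add)
  qed
  have ex2: "q^(Suc j * (Suc j - 1) + r * Suc j) = q^(j*(j-1)+r*j) * (x*x*d)"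
  proof -
    have "Suc j * (Suc j - 1) + r * Suc j = j*(j-1)+r*j + (j + j + r)" by (cases j) auto
    then show ?thesis by (simp add: x_def d_def power_add)
  qed
  have sh: "\<And>n. qp_inv q (n - 1) = (1 - q powi n) * qp_inv q n" using qi_shift[OF nq q0] .
  have shv: "qp_inv q (int v - int j) = (1 - z2) * qp_inv q (int v + 1 - int j)"
    using sh[of "int v + 1 - int j"] by (simp add: z2_def)
  have shp: "qp_inv q (int p - int (Suc j)) = (1 - z1) * qp_inv q (int p - int j)"
    using sh[of "int p - int j"] by (simp add: z1_def algebra_simps)
  have shu: "qp_inv q (int u - int (Suc j)) = (1 - U) * qp_inv q (int u - int j)"
  proof -
    have "q powi (int u - int j) = U" using ju by (simp add: U_def power_int_of_nat[symmetric] of_nat_diff)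
    then show ?thesis using sh[of "int u - int j"] by (simp add: algebra_simps)
  qed
  have shj: "qp_inv q (int j - 1) = (1 - x) * qp_inv q (int j)"
    using sh[of "int j"] by (simp add: x_def power_int_of_nat)
  have shr: "qp_inv q (int r + int j - 1) = (1 - d*x) * qp_inv q (int r + int j)"
  proof -
    have "q powi (int r + int j) = q powi (int (r+j))" by simp
    also have "\<dots> = q^(r+j)" by (rule power_int_of_nat)
    finally have "q powi (int r + int j) = d*x" by (simp add: d_def x_def power_add)
    then show ?thesis using sh[of "int r + int j"] by simp
  qed
  have e1: "tS q u (Suc v) p r j = B * (x*(1-Q1))"
  proof -
    have a1: "u + Suc v + p + r - j = Suc (N - j)" using jN by (simp add: N_def)
    have a2: "int (Suc v) - int j = int v + 1 - int j" by simp
    show ?thesis unfolding tS_def a1 a2 pq1 ex1 B_def by (simp only: mult_ac)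
  qed
  have e2: "tS q u v p r j = B * (x*(1-z2))"
  proof -
    have a1: "u + v + p + r - j = N - j" by (simp add: N_def)
    show ?thesis unfolding tS_def a1 shv ex1 B_def by (simp only: mult_ac)
  qed
  have e3: "GS q u v p r (Suc j) = B * (x*x*d*(1-z1)*(1-U)*(1-z2))"
  proof -
    have a1: "u+v+p+r+1 - Suc j = N - j" by (simp add: N_def)
    have a2: "int v + 1 - int (Suc j) = int v - int j" by simp
    have a3: "int r + int (Suc j) - 1 = int r + int j" by simp
    have a4: "int (Suc j) - 1 = int j" by simp
    show ?thesis unfolding GS_def a1 a2 a3 a4 ex2 shp shu shv B_def by (simp only: mult_ac)
  qed
  have e4: "GS q u v p r j = B * ((1 - Q1)*(1-x)*(1-d*x))"
  proof -
    have a1: "u+v+p+r+1 - j = Suc (N - j)" using jN by (simp add: N_def)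
    show ?thesis unfolding GS_def a1 pq1 shj shr B_def by (simp only: mult_ac)
  qed
  have x0: "x \<noteq> 0" using q0 by (simp add: x_def)
  define Dn where "Dn = (1 - q^(v+1)) * (1 - q^(v+r+1))"
  have b1: "1 - q^(v+1) \<noteq> 0" using pow_ne1[OF nq, of "v+1"] by simp
  have b2: "1 - q^(v+r+1) \<noteq> 0" using pow_ne1[OF nq, of "v+r+1"] by simp
  have Deq: "Dn = (1-q^(v+1))*(1-q^(v+r+1))" by (simp add: Dn_def)
  have Ddef: "Dn = (1 - q * q ^ v) * (1 - q * q ^ v * d)" by (simp add: Dn_def d_def power_add algebra_simps)
  have Dn0: "Dn \<noteq> 0" using b1 b2 Deq by simp
  have rhoD: "(1-q^(u+v+r+1))*(1-q^(v+p+r+1))/((1-q^(v+1))*(1-q^(v+r+1))) * Dn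
     = (1 - q * q ^ u * q ^ v * d) * (1 - q * q ^ v * q ^ p * d)"
  proof -
    have h0: "(1-q^(u+v+r+1))*(1-q^(v+p+r+1))/((1-q^(v+1))*(1-q^(v+r+1))) * Dn
       = (1-q^(u+v+r+1))*(1-q^(v+p+r+1))" using Dn0 Deq by simp
    have h1: "q^(u+v+r+1) = q * q ^ u * q ^ v * d" by (simp add: d_def power_add)
    have h2: "q^(v+p+r+1) = q * q ^ v * q ^ p * d" by (simp add: d_def power_add)
    show ?thesis using h0 by (simp only: h1 h2)
  qed
  have CD: "(0 - q^(v+1)/((1-q^(v+1))*(1-q^(v+r+1)))) * Dn = - q * q ^ v"
    using Dn0 Deq by simp
  have hQ: "Q1 * x = q * q ^ u * q ^ v * q ^ p * d"
  proof -
    have "N + 1 - j + j = Suc (u+v+p+r)" using jN by (simp add: N_def)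
    then have "Q1 * x = q^(Suc (u+v+p+r))" by (simp add: Q1_def x_def flip: power_add)
    then show ?thesis by (simp add: d_def power_add)
  qed
  have hz1: "z1 * x = q^p"
    using q0 by (simp add: z1_def x_def flip: power_int_of_nat power_int_add)
  have hz2: "z2 * x = q * q ^ v"
  proof -
    have "z2 * x = q powi ((int v + 1 - int j) + int j)"
      using power_int_add[of q "int v + 1 - int j" "int j"] q0 by (simp add: z2_def x_def power_int_of_nat)
    also have "(int v + 1 - int j) + int j = int (Suc v)" by simp
    also have "q powi int (Suc v) = q ^ Suc v" by (rule power_int_of_nat)
    finally show ?thesis by simp
  qed
  have hU: "U * x = q^u" using ju by (simp add: U_def x_def flip: power_add)
  have sc: "x*(1 - Q1) = (1-q^(u+v+r+1))*(1-q^(v+p+r+1))/((1-q^(v+1))*(1-q^(v+r+1))) * (x*(1 - z2))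
     + (0 - q^(v+1)/((1-q^(v+1))*(1-q^(v+r+1)))) * (x*x*d*(1-z1)*(1-U)*(1-z2))
     - (0 - q^(v+1)/((1-q^(v+1))*(1-q^(v+r+1)))) * ((1 - Q1)*(1-x)*(1-d*x))"
    by (rule wz_scalar[OF x0 Dn0 Ddef rhoD CD hQ hz1 hz2 hU])
  show ?thesis unfolding e1 e2 e3 e4 by (rule lin_comb[OF sc])
qed



definition RS :: "complex \<Rightarrow> nat \<Rightarrow> nat \<Rightarrow> nat \<Rightarrow> nat \<Rightarrow> complex" where
  "RS q u v p r = qpoch q (u+v+r) * qpoch q (u+p+r) * qpoch q (v+p+r) /
     (qpoch q p * qpoch q u * qpoch q v * qpoch q (p+r) * qpoch q (u+r) * qpoch q (v+r))"

lemma saal: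
  fixes q :: complex
  assumes nq: "norm q < 1" and q0: "q \<noteq> 0"
  shows "(\<Sum>j=0..u. tS q u v p r j) = RS q u v p r"
proof (induction v)
  case 0
  have "(\<Sum>j=0..u. tS q u 0 p r j) = (\<Sum>j\<in>{0}. tS q u 0 p r j)"
    by (rule sum.mono_neutral_right) (auto simp: tS_def qi_neg)
  also have "\<dots> = qpoch q (u+p+r) / (qpoch q p * qpoch q u * qpoch q r)"
    by (simp add: tS_def qi_nat qp_inv_def[of q 0] add.commute add.left_commute)
  also have "\<dots> = RS q u 0 p r"
    using qpoch_nz[OF nq] by (simp add: RS_def field_simps add.commute add.left_commute)
  finally show ?case .
next
  case (Suc v)
  define rho where "rho = (1-q^(u+v+r+1))*(1-q^(v+p+r+1))/((1-q^(v+1))*(1-q^(v+r+1)))"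
  define C where "C = (0 - q^(v+1)/((1-q^(v+1))*(1-q^(v+r+1))))"
  have "(\<Sum>j=0..u. tS q u (Suc v) p r j)
      = (\<Sum>j=0..u. rho * tS q u v p r j + (C * GS q u v p r (Suc j) - C * GS q u v p r j))"
    by (rule sum.cong) (auto simp: wz_point[OF nq q0] rho_def C_def)
  also have "\<dots> = rho * (\<Sum>j=0..u. tS q u v p r j) + (C * GS q u v p r (Suc u) - C * GS q u v p r 0)"
    using sum_Suc_diff[of 0 u "\<lambda>j. C * GS q u v p r j"] by (simp add: sum.distrib sum_distrib_left)
  also have "GS q u v p r (Suc u) = 0" by (simp add: GS_def qi_neg)
  also have "GS q u v p r 0 = 0" by (simp add: GS_def qi_neg)
  finally have "(\<Sum>j=0..u. tS q u (Suc v) p r j) = rho * RS q u v p r" using Suc by simp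
  also have "\<dots> = RS q u (Suc v) p r"
  proof -
    have b1: "1 - q^(v+1) \<noteq> 0" using pow_ne1[OF nq, of "v+1"] by simp
    have b2: "1 - q^(v+r+1) \<noteq> 0" using pow_ne1[OF nq, of "v+r+1"] by simp
    have s1: "u + Suc v + r = Suc (u+v+r)" by simp
    have s2: "Suc v + p + r = Suc (v+p+r)" by simp
    have s3: "Suc v + r = Suc (v+r)" by simp
    show ?thesis unfolding RS_def rho_def s1 s2 s3 qpoch_Suc
      using qpoch_nz[OF nq] b1 b2 by (simp add: field_simps)
  qed
  finally show ?case .
qed


definition XX :: "complex \<Rightarrow> nat \<Rightarrow> nat \<Rightarrow> nat \<Rightarrow> nat \<Rightarrow> nat \<Rightarrow> nat \<Rightarrow> nat \<Rightarrow> nat \<Rightarrow> complex" where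
  "XX q s l m n u v k j = q^(k*k + s*k + (j*j + s*j) + k*j) * qpoch q (l+m+n+s-k) * qpoch q (u+v+l+s-j)
     * qp_inv q (int k) * qp_inv q (int m - int k) * qp_inv q (int n - int k)
     * qp_inv q (int j) * qp_inv q (int l - (int k + int j)) * qp_inv q (int u - int j)
     * qp_inv q (int v - int j) * qp_inv q (int (s+k+j))"

lemma XX_sym: "XX q s l m n u v k j = XX q s l u v m n j k"
  unfolding XX_def by (simp add: ac_simps)

lemma XX_range:
  assumes "k \<le> l"
  shows "(\<Sum>j=0..u. XX q s l m n u v k j) = (\<Sum>j=0..l. XX q s l m n u v k j)"
proof -
  have "(\<Sum>j=0..u. XX q s l m n u v k j) = (\<Sum>j=0..u+l. XX q s l m n u v k j)"
    by (rule sum.mono_neutral_left) (auto simp: XX_def qi_neg)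
  also have "\<dots> = (\<Sum>j=0..l. XX q s l m n u v k j)"
    by (rule sum.mono_neutral_right) (auto simp: XX_def qi_neg)
  finally show ?thesis .
qed

lemma term_expand:
  fixes q :: complex
  assumes nq: "norm q < 1" and q0: "q \<noteq> 0" and kl: "k \<le> l"
  shows "qp_inv q (int u) * qp_inv q (int v) * (q ^ (k^2 + s*k) * qp q (int (l+m+n) - int k + int s)
      * qp q (int (u+v+k+s)) * qp_inv q (int k) * qp_inv q (int l - int k) * qp_inv q (int m - int k)
      * qp_inv q (int n - int k) * qp_inv q (int (u+k+s)) * qp_inv q (int (v+k+s)))
    = qpoch q (l+s) * qp_inv q (int (u+l+s)) * qp_inv q (int (v+l+s)) * (\<Sum>j=0..l. XX q s l m n u v k j)"
proof -
  define K where "K = q^(k^2+s*k) * qpoch q (l+m+n+s-k) * qp_inv q (int k) * qp_inv q (int m - int k) * qp_inv q (int n - int k)"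
  have T: "K * tS q u v (l-k) (s+k) j = XX q s l m n u v k j" for j
  proof -
    have a1: "int (l-k) - int j = int l - (int k + int j)" using kl by simp
    have a2: "u+v+(l-k)+(s+k)-j = u+v+l+s-j" using kl by simp
    have a3: "int (s+k) + int j = int (s+k+j)" by simp
    have pw: "q^(k*k+s*k+(j*j+s*j)+k*j) = q^(k^2+s*k) * q^(j*j+(s+k)*j)"
      by (simp add: power_add[symmetric] power2_eq_square algebra_simps)
    show ?thesis unfolding K_def tS_def XX_def a1 a2 a3 pw by (simp only: mult_ac)
  qed
  have S: "(\<Sum>j=0..u. tS q u v (l-k) (s+k) j) = RS q u v (l-k) (s+k)" by (rule saal[OF nq q0])
  have "(\<Sum>j=0..l. XX q s l m n u v k j) = (\<Sum>j=0..u. XX q s l m n u v k j)"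
    using XX_range[OF kl] by simp
  also have "\<dots> = K * (\<Sum>j=0..u. tS q u v (l-k) (s+k) j)"
    by (simp add: T sum_distrib_left)
  also have "\<dots> = K * RS q u v (l-k) (s+k)" using S by simp
  finally have R: "(\<Sum>j=0..l. XX q s l m n u v k j) = K * RS q u v (l-k) (s+k)" .
  have b1: "u+(l-k)+(s+k) = u+l+s" "v+(l-k)+(s+k) = v+l+s" "l-k+(s+k) = l+s" using kl by auto
  have b2: "qp q (int (l+m+n) - int k + int s) = qpoch q (l+m+n+s-k)"
  proof -
    have h: "int (l+m+n) - int k + int s = int (l+m+n+s-k)" using kl by simp
    show ?thesis unfolding h by (rule qp_nat)
  qed
  have b3: "qp_inv q (int l - int k) = 1 / qpoch q (l-k)"
  proof -
    have h: "int l - int k = int (l-k)" using kl by simp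
    show ?thesis unfolding h by (rule qi_nat)
  qed
  have nz: "\<And>i. qpoch q i \<noteq> 0" using qpoch_nz[OF nq] .
  show ?thesis unfolding R K_def RS_def b1 b2 b3 qi_nat qp_nat
    using nz by (simp add: field_simps add.commute add.left_commute)
qed


definition LH :: "complex \<Rightarrow> nat \<Rightarrow> nat \<Rightarrow> nat \<Rightarrow> nat \<Rightarrow> nat \<Rightarrow> nat \<Rightarrow> complex" where
  "LH q s l m n u v = qp_inv q (int (l+m+s)) * qp_inv q (int (l+n+s)) * qp_inv q (int u) * qp_inv q (int v) *
     (\<Sum>k. q ^ (k^2 + s*k) * qp q (int (l+m+n) - int k + int s) * qp q (int (u+v+k+s)) *
        qp_inv q (int k) * qp_inv q (int l - int k) * qp_inv q (int m - int k) *
        qp_inv q (int n - int k) * qp_inv q (int (u+k+s)) * qp_inv q (int (v+k+s)))"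

lemma LH_eq:
  fixes q :: complex
  assumes nq: "norm q < 1" and q0: "q \<noteq> 0"
  shows "LH q s l m n u v = qp_inv q (int (l+m+s)) * qp_inv q (int (l+n+s)) * qpoch q (l+s)
     * qp_inv q (int (u+l+s)) * qp_inv q (int (v+l+s)) * (\<Sum>k=0..l. \<Sum>j=0..l. XX q s l m n u v k j)"
proof -
  define f where "f = (\<lambda>k. q ^ (k^2 + s*k) * qp q (int (l+m+n) - int k + int s) * qp q (int (u+v+k+s)) *
        qp_inv q (int k) * qp_inv q (int l - int k) * qp_inv q (int m - int k) *
        qp_inv q (int n - int k) * qp_inv q (int (u+k+s)) * qp_inv q (int (v+k+s)))"
  define A where "A = qp_inv q (int (l+m+s)) * qp_inv q (int (l+n+s))"
  define P where "P = qpoch q (l+s) * qp_inv q (int (u+l+s)) * qp_inv q (int (v+l+s))"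
  have "LH q s l m n u v = A * qp_inv q (int u) * qp_inv q (int v) * suminf f"
    by (simp add: LH_def f_def A_def)
  also have "suminf f = (\<Sum>k\<in>{0..l}. f k)"
    by (rule suminf_finite) (auto simp: f_def qi_neg)
  also have "A * qp_inv q (int u) * qp_inv q (int v) * (\<Sum>k\<in>{0..l}. f k)
      = A * (\<Sum>k=0..l. qp_inv q (int u) * qp_inv q (int v) * f k)"
    by (simp add: sum_distrib_left mult.assoc)
  also have "(\<Sum>k=0..l. qp_inv q (int u) * qp_inv q (int v) * f k) = (\<Sum>k=0..l. P * (\<Sum>j=0..l. XX q s l m n u v k j))"
  proof (rule sum.cong)
    fix k assume "k \<in> {0..l}"
    then have kl: "k \<le> l" by simp
    show "qp_inv q (int u) * qp_inv q (int v) * f k = P * (\<Sum>j=0..l. XX q s l m n u v k j)"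
      unfolding f_def P_def by (rule term_expand[OF nq q0 kl])
  qed simp
  also have "\<dots> = P * (\<Sum>k=0..l. \<Sum>j=0..l. XX q s l m n u v k j)"
    by (simp add: sum_distrib_left)
  finally show ?thesis by (simp add: A_def P_def mult.assoc)
qed

lemma LH_sym:
  fixes q :: complex
  assumes nq: "norm q < 1" and q0: "q \<noteq> 0"
  shows "LH q s l m n u v = LH q s l u v m n"
proof -
  have "(\<Sum>k=0..l. \<Sum>j=0..l. XX q s l m n u v k j) = (\<Sum>j=0..l. \<Sum>k=0..l. XX q s l m n u v k j)"
    by (rule sum.swap)
  also have "\<dots> = (\<Sum>j=0..l. \<Sum>k=0..l. XX q s l u v m n j k)"
    by (simp add: XX_sym[of q s l m n u v])
  finally have eq: "(\<Sum>k=0..l. \<Sum>j=0..l. XX q s l m n u v k j) = (\<Sum>j=0..l. \<Sum>k=0..l. XX q s l u v m n j k)" .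
  show ?thesis unfolding LH_eq[OF nq q0] eq by (simp only: ac_simps)
qed

theorem corollary5p7:
  fixes q :: complex and l m n u v :: nat
  assumes "0 < norm q" and "norm q < 1"
  shows "qp_inv q (int (l+m)) * qp_inv q (int (l+n)) * qp_inv q (int u) * qp_inv q (int v) *
           (\<Sum>k. q ^ (k^2) * qp q (int (l+m+n) - int k) * qp q (int (u+v+k)) *
              qp_inv q (int k) * qp_inv q (int l - int k) * qp_inv q (int m - int k) *
              qp_inv q (int n - int k) * qp_inv q (int (u+k)) * qp_inv q (int (v+k)))
       = qp_inv q (int (l+u)) * qp_inv q (int (l+v)) * qp_inv q (int m) * qp_inv q (int n) *
           (\<Sum>k. q ^ (k^2) * qp q (int (l+u+v) - int k) * qp q (int (m+n+k)) *
              qp_inv q (int k) * qp_inv q (int l - int k) * qp_inv q (int u - int k) *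
              qp_inv q (int v - int k) * qp_inv q (int (m+k)) * qp_inv q (int (n+k)))
     \<and> qp_inv q (int (l+m+1)) * qp_inv q (int (l+n+1)) * qp_inv q (int u) * qp_inv q (int v) *
           (\<Sum>k. q ^ (k^2+k) * qp q (int (l+m+n) - int k + 1) * qp q (int (u+v+k+1)) *
              qp_inv q (int k) * qp_inv q (int l - int k) * qp_inv q (int m - int k) *
              qp_inv q (int n - int k) * qp_inv q (int (u+k+1)) * qp_inv q (int (v+k+1)))
       = qp_inv q (int (l+u+1)) * qp_inv q (int (l+v+1)) * qp_inv q (int m) * qp_inv q (int n) *
           (\<Sum>k. q ^ (k^2+k) * qp q (int (l+u+v) - int k + 1) * qp q (int (m+n+k+1)) *
              qp_inv q (int k) * qp_inv q (int l - int k) * qp_inv q (int u - int k) *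
              qp_inv q (int v - int k) * qp_inv q (int (m+k+1)) * qp_inv q (int (n+k+1)))"
proof -
  have q0: "q \<noteq> 0" using assms(1) by auto
  have h0: "LH q 0 l m n u v = LH q 0 l u v m n" by (rule LH_sym[OF assms(2) q0])
  have h1: "LH q 1 l m n u v = LH q 1 l u v m n" by (rule LH_sym[OF assms(2) q0])
  show ?thesis
  proof
    show "qp_inv q (int (l+m)) * qp_inv q (int (l+n)) * qp_inv q (int u) * qp_inv q (int v) *
           (\<Sum>k. q ^ (k^2) * qp q (int (l+m+n) - int k) * qp q (int (u+v+k)) *
              qp_inv q (int k) * qp_inv q (int l - int k) * qp_inv q (int m - int k) *
              qp_inv q (int n - int k) * qp_inv q (int (u+k)) * qp_inv q (int (v+k)))
       = qp_inv q (int (l+u)) * qp_inv q (int (l+v)) * qp_inv q (int m) * qp_inv q (int n) *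
           (\<Sum>k. q ^ (k^2) * qp q (int (l+u+v) - int k) * qp q (int (m+n+k)) *
              qp_inv q (int k) * qp_inv q (int l - int k) * qp_inv q (int u - int k) *
              qp_inv q (int v - int k) * qp_inv q (int (m+k)) * qp_inv q (int (n+k)))"
      using h0 unfolding LH_def by (simp only: add_0_right mult_zero_left of_nat_0)
  next
    show "qp_inv q (int (l+m+1)) * qp_inv q (int (l+n+1)) * qp_inv q (int u) * qp_inv q (int v) *
           (\<Sum>k. q ^ (k^2+k) * qp q (int (l+m+n) - int k + 1) * qp q (int (u+v+k+1)) *
              qp_inv q (int k) * qp_inv q (int l - int k) * qp_inv q (int m - int k) *
              qp_inv q (int n - int k) * qp_inv q (int (u+k+1)) * qp_inv q (int (v+k+1)))
       = qp_inv q (int (l+u+1)) * qp_inv q (int (l+v+1)) * qp_inv q (int m) * qp_inv q (int n) *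
           (\<Sum>k. q ^ (k^2+k) * qp q (int (l+u+v) - int k + 1) * qp q (int (m+n+k+1)) *
              qp_inv q (int k) * qp_inv q (int l - int k) * qp_inv q (int u - int k) *
              qp_inv q (int v - int k) * qp_inv q (int (m+k+1)) * qp_inv q (int (n+k+1)))"
      using h1 unfolding LH_def by (simp only: mult_1_left of_nat_1)
  qed
qed

end
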